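(* Suppose (a) $\mathcal{A}$ is surjective and the primal--dual SDP pair has a nonempty set of KKT points, and (b) three-step ADMM converges to a KKT point $(X_{\star},y_{\star},S_{\star})$ with $\operatorname{rank}(X_{\star})+\operatorname{rank}(S_{\star})=n$. Then there exist $\bar k_Z\in\mathbb{N}$ and $\alpha_Z>0$ such that for any integer $k\ge\bar k_Z$, \[ \mathrm{dist}(Z^{(k)},\mathcal{Z}_\star)\le\alpha_Z\big(\|Z^{(k+1)}-Z^{(k)}\|_F+\|\Pi_{\mathcal{T}_{S_{\star}}}(X^{(k)})\|_F+\sigma\|\Pi_{\mathcal{T}_{X_{\star}}}(S^{(k)})\|_F\big). \]
   Context: Consider the standard-form SDP pair: primal $\min \langle C,X\rangle$ s.t. $\mathcal{A}X=b$, $X\in\mathbb{S}^n_+$; dual $\max b^{\mathsf T}y$ s.t. $\mathcal{A}^*y+S=C$, $S\in\mathbb{S}^n_+$. ADMM with penalty $\sigma>0$ is written as the one-step fixed-point iteration $Z^{(k+1)}=\mathcal{A}^*(\mathcal{A}\mathcal{A}^* )^{-1}\mathcal{A}(-2\Pi_{\mathbb{S}^n_+}(Z^{(k)})+Z^{(k)})+\Pi_{\mathbb{S}^n_+}(Z^{(k)})+\mathcal{A}^*(\mathcal{A}\mathcal{A}^* )^{-1}b+\sigma\mathcal{A}^*(\mathcal{A}\mathcal{A}^* )^{-1}\mathcal{A}C-\sigma C$, with $X^{(k)}=\Pi_{\mathbb{S}^n_+}(Z^{(k)})$ and $\sigma S^{(k)}=\Pi_{\mathbb{S}^n_+}(-Z^{(k)})$.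 $\mathcal{Z}_\star$ denotes the set of fixed points of this iteration. Without loss of generality $X_{\star}=\mathrm{diag}(\lambda_1,\dots,\lambda_r,0,\dots,0)$ and $\sigma S_{\star}=\mathrm{diag}(0,\dots,0,-\lambda_{r+1},\dots,-\lambda_n)$ with $\lambda_1\ge\dots\ge\lambda_r>0>\lambda_{r+1}\ge\dots\ge\lambda_n$. The subspaces are $\mathcal{T}_{S_{\star}}=\{\begin{bmatrix}0&B^{\mathsf T}\\ B&D\end{bmatrix}: B\in\mathbb{R}^{(n-r)\times r}, D\in\mathbb{S}^{n-r}\}$ and $\mathcal{T}_{X_{\star}}=\{\begin{bmatrix}A&B^{\mathsf T}\\ B&0\end{bmatrix}: A\in\mathbb{S}^{r}, B\in\mathbb{R}^{(n-r)\times r}\}$; $\Pi$ denotes orthogonal projection and $\mathrm{dist}$ the Frobenius distance. *)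

theory Defs
  imports "HOL-Analysis.Analysis"
begin

text \<open>Matrices are elements of real^'n^'n. The built-in norm/inner product/dist on
this type are exactly the Frobenius norm, the trace inner product and the Frobenius distance.\<close>

definition symmetric_mat :: "real^'n^'n \<Rightarrow> bool" where
  "symmetric_mat M \<longleftrightarrow> transpose M = M"

definition psd :: "real^'n^'n \<Rightarrow> bool" where
  "psd M \<longleftrightarrow> symmetric_mat M \<and> (\<forall>x. 0 \<le> x \<bullet> (M *v x))"

definition psd_cone :: "(real^'n^'n) set" where
  "psd_cone = {M. psd M}"

definition proj_psd :: "real^'n^'n \<Rightarrow> real^'n^'n" where
  "proj_psd Z = closest_point psd_cone Z"

definition Aop :: "('m::finite \<Rightarrow> real^'n^'n) \<Rightarrow> real^'n^'n \<Rightarrow> real^'m" where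
  "Aop Ai X = (\<chi> i. Ai i \<bullet> X)"

definition Astar :: "('m::finite \<Rightarrow> real^'n^'n) \<Rightarrow> real^'m \<Rightarrow> real^'n^'n" where
  "Astar Ai y = (\<Sum>i\<in>UNIV. (y $ i) *\<^sub>R Ai i)"

definition AAinv :: "('m::finite \<Rightarrow> real^'n^'n) \<Rightarrow> real^'m \<Rightarrow> real^'m" where
  "AAinv Ai y = matrix_inv (matrix (\<lambda>v. Aop Ai (Astar Ai v))) *v y"

definition KKT :: "('m::finite \<Rightarrow> real^'n^'n) \<Rightarrow> real^'m \<Rightarrow> real^'n^'n
    \<Rightarrow> real^'n^'n \<Rightarrow> real^'m \<Rightarrow> real^'n^'n \<Rightarrow> bool" where
  "KKT Ai b C X y S \<longleftrightarrow> psd X \<and> psd S \<and> Aop Ai X = b \<and> Astar Ai y + S = C \<and> X \<bullet> S = 0"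

definition admm_map :: "('m::finite \<Rightarrow> real^'n^'n) \<Rightarrow> real^'m \<Rightarrow> real^'n^'n \<Rightarrow> real
    \<Rightarrow> real^'n^'n \<Rightarrow> real^'n^'n" where
  "admm_map Ai b C \<sigma> Z =
     Astar Ai (AAinv Ai (Aop Ai (Z - 2 *\<^sub>R proj_psd Z))) + proj_psd Z
     + Astar Ai (AAinv Ai b) + \<sigma> *\<^sub>R Astar Ai (AAinv Ai (Aop Ai C)) - \<sigma> *\<^sub>R C"

definition admm_fixed :: "('m::finite \<Rightarrow> real^'n^'n) \<Rightarrow> real^'m \<Rightarrow> real^'n^'n \<Rightarrow> real
    \<Rightarrow> (real^'n^'n) set" where
  "admm_fixed Ai b C \<sigma> = {Z. admm_map Ai b C \<sigma> Z = Z}"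

text \<open>Coordinate-free form of the subspaces T_{S*} and T_{X*}. In the eigenbasis where
X* = diag(lambda_1..lambda_r,0..0) (lambda_i>0) and S* is supported on the last n-r
coordinates, "top-left r x r block zero" is equivalent to X* M X* = 0, and
"bottom-right block zero" is equivalent to S* M S* = 0.\<close>
definition T_S :: "real^'n^'n \<Rightarrow> (real^'n^'n) set" where
  "T_S Xs = {M. symmetric_mat M \<and> Xs ** M ** Xs = 0}"

definition T_X :: "real^'n^'n \<Rightarrow> (real^'n^'n) set" where
  "T_X Ss = {M. symmetric_mat M \<and> Ss ** M ** Ss = 0}"

end

theory Submission
  imports Defs
begin


definition outer :: "real^'n \<Rightarrow> real^'n \<Rightarrow> real^'n^'n" where
  "outer u v = (\<chi> i j. u$i * v$j)"

lemma outer_mv: "outer u v *v x = (v \<bullet> x) *\<^sub>R u"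
  by (simp add: outer_def matrix_vector_mult_def vec_eq_iff inner_vec_def sum_distrib_left mult_ac)

lemma inner_outer: "M \<bullet> outer u v = u \<bullet> (M *v v)"
  by (simp add: outer_def matrix_vector_mult_def inner_vec_def sum_distrib_left mult_ac)

lemma inner_outer': "outer u v \<bullet> M = u \<bullet> (M *v v)"
  by (simp add: inner_commute inner_outer)

lemma norm_outer: "norm (outer u v) = norm u * norm v"
proof -
  have "outer u v \<bullet> outer u v = (u \<bullet> u) * (v \<bullet> v)"
    by (simp add: inner_outer outer_mv)
  then show ?thesis
    by (simp add: norm_eq_sqrt_inner real_sqrt_mult)
qed

lemma transpose_add: "transpose (A + B) = transpose A + transpose (B::real^'n^'n)"
  by (simp add: transpose_def vec_eq_iff)

lemma transpose_diff: "transpose (A - B) = transpose A - transpose (B::real^'n^'n)"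
  by (simp add: transpose_def vec_eq_iff)

lemma transpose_neg: "transpose (- A) = - transpose (A::real^'n^'n)"
  by (simp add: transpose_def vec_eq_iff)

lemma transpose_zero: "transpose (0::real^'n^'n) = 0"
  by (simp add: transpose_def vec_eq_iff)

lemma mv_scale: "M *v (t *\<^sub>R y) = t *\<^sub>R (M *v (y::real^'n))"
  using real_vector.linear_scale[OF matrix_vector_mul_linear] by blast

lemma transpose_sum: "transpose (\<Sum>i\<in>I. f i) = (\<Sum>i\<in>I. transpose (f i::real^'n^'n))"
  by (induction I rule: infinite_finite_induct) (auto simp: transpose_add transpose_zero)

lemma sym_mv: "symmetric_mat M \<Longrightarrow> (M *v x) \<bullet> y = x \<bullet> (M *v y)"
  unfolding symmetric_mat_def
  by (metis dot_lmul_matrix inner_commute vector_transpose_matrix)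

lemma psd_sym: "psd M \<Longrightarrow> symmetric_mat M"
  by (simp add: psd_def)

lemma psd_nonneg: "psd M \<Longrightarrow> 0 \<le> x \<bullet> (M *v x)"
  by (simp add: psd_def)

lemma psd_cs:
  assumes "psd M"
  shows "(y \<bullet> (M *v x))^2 \<le> (x \<bullet> (M *v x)) * (y \<bullet> (M *v y))"
proof -
  have sym: "y \<bullet> (M *v x) = x \<bullet> (M *v y)"
    using sym_mv[OF psd_sym[OF assms]] by (simp add: inner_commute)
  have q: "0 \<le> (x + t *\<^sub>R y) \<bullet> (M *v (x + t *\<^sub>R y))" for t
    using psd_nonneg[OF assms] by blast
  have e: "(x + t *\<^sub>R y) \<bullet> (M *v (x + t *\<^sub>R y))
      = x \<bullet> (M *v x) + 2 * t * (y \<bullet> (M *v x)) + t^2 * (y \<bullet> (M *v y))" for t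
    by (simp add: matrix_vector_right_distrib mv_scale inner_add_left inner_add_right
        sym power2_eq_square algebra_simps)
  define a where "a = y \<bullet> (M *v y)"
  define b where "b = y \<bullet> (M *v x)"
  define c where "c = x \<bullet> (M *v x)"
  have q2: "0 \<le> c + 2 * t * b + t^2 * a" for t using q[of t] e[of t] a_def b_def c_def by simp
  have a0: "0 \<le> a" using psd_nonneg[OF assms] a_def by simp
  show ?thesis
  proof (cases "a = 0")
    case True
    have "b = 0"
    proof (rule ccontr)
      assume "b \<noteq> 0"
      have "0 \<le> c + 2 * (- (c + 1) / (2 * b)) * b" using q2[of "- (c+1) / (2*b)"] True by simp
      also have "\<dots> = -1" using \<open>b \<noteq> 0\<close> by (simp add: field_simps)
      finally show False by simp
    qed
    then show ?thesis using True a_def b_def by simp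
  next
    case False
    then have ap: "a > 0" using a0 by simp
    have "0 \<le> c + 2 * (- b / a) * b + (- b / a)^2 * a" using q2[of "- b / a"] .
    also have "\<dots> = (c * a - b^2) / a" using ap by (simp add: field_simps power2_eq_square)
    finally have "0 \<le> c * a - b^2" using ap by (simp add: divide_nonneg_pos zero_le_divide_iff)
    then show ?thesis using a_def b_def c_def by simp
  qed
qed

lemma psd_zero_form:
  assumes "psd M" "x \<bullet> (M *v x) = 0"
  shows "M *v x = 0"
proof -
  have "((M *v x) \<bullet> (M *v x))^2 \<le> 0"
    using psd_cs[OF assms(1), of "M *v x" x] assms(2) by simp
  then show ?thesis by simp
qed

lemma psd_outer: "psd (outer u u)"
proof -
  have "symmetric_mat (outer u u)"
    unfolding symmetric_mat_def by (auto simp: outer_def transpose_def vec_eq_iff mult.commute)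
  moreover have "0 \<le> x \<bullet> (outer u u *v x)" for x
    by (simp add: outer_mv inner_commute)
  ultimately show ?thesis unfolding psd_def by blast
qed

lemma sym_entry: "symmetric_mat M \<Longrightarrow> M$i$j = M$j$i"
  unfolding symmetric_mat_def transpose_def by (metis vec_lambda_beta)

lemma mv_axis_entry: "(M *v axis a 1) $ i = M$i$a"
  by (simp add: matrix_vector_mult_def axis_def if_distrib sum.delta' cong: if_cong)

lemma axis_inner: "axis a 1 \<bullet> y = y $ a"
  by (simp add: inner_axis')

lemma outer_entry: "outer u v $ i $ j = u$i * v$j"
  by (simp add: outer_def)

lemma psd_decomp_aux:
  fixes S :: "'n::finite set"
  assumes "finite S"
  shows "\<forall>M::real^'n^'n. psd M \<and> (\<forall>i j. i \<notin> S \<or> j \<notin> S \<longrightarrow> M$i$j = 0) \<longrightarrow>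
     (\<exists>(N::nat) u. M = (\<Sum>k<N. outer (u k) (u k)) \<and> (\<forall>k<N. \<exists>v. u k = M *v v))"
  using assms
proof (induction S rule: finite_induct)
  case empty
  show ?case
  proof (intro allI impI)
    fix M :: "real^'n^'n"
    assume "psd M \<and> (\<forall>i j. i \<notin> {} \<or> j \<notin> {} \<longrightarrow> M $ i $ j = 0)"
    then have M0: "M = 0" by (simp add: vec_eq_iff)
    show "\<exists>(N::nat) u. M = (\<Sum>k<N. outer (u k) (u k)) \<and> (\<forall>k<N. \<exists>v. u k = M *v v)"
      by (intro exI[where x="0::nat"] exI[where x="\<lambda>k::nat. 0::real^'n"]) (simp add: M0)
  qed
next
  case (insert a S)
  show ?case
  proof (intro allI impI)
    fix M :: "real^'n^'n"
    assume H: "psd M \<and> (\<forall>i j. i \<notin> insert a S \<or> j \<notin> insert a S \<longrightarrow> M $ i $ j = 0)"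
    then have psdM: "psd M" and supp: "\<And>i j. i \<notin> insert a S \<or> j \<notin> insert a S \<Longrightarrow> M $ i $ j = 0"
      by auto
    have symM: "symmetric_mat M" using psd_sym[OF psdM] .
    define e :: "real^'n" where "e = axis a 1"
    have eMe: "e \<bullet> (M *v e) = M$a$a"
      by (simp add: e_def axis_inner mv_axis_entry)
    have Maa: "0 \<le> M$a$a" using psd_nonneg[OF psdM, of e] eMe by simp
    show "\<exists>(N::nat) u. M = (\<Sum>k<N. outer (u k) (u k)) \<and> (\<forall>k<N. \<exists>v. u k = M *v v)"
    proof (cases "M$a$a = 0")
      case True
      then have "M *v e = 0" using psd_zero_form[OF psdM, of e] eMe by simp
      then have col: "M$i$a = 0" for i
        using mv_axis_entry[of M a i] e_def by simp
      have "\<forall>i j. i \<notin> S \<or> j \<notin> S \<longrightarrow> M $ i $ j = 0"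
      proof (intro allI impI)
        fix i j assume "i \<notin> S \<or> j \<notin> S"
        then show "M$i$j = 0"
          using supp[of i j] col[of i] col[of j] sym_entry[OF symM, of i j] by (cases "i = a"; cases "j = a") auto
      qed
      then show ?thesis using insert.IH psdM by blast
    next
      case False
      then have Mpos: "M$a$a > 0" using Maa by simp
      define s where "s = sqrt (M$a$a)"
      have spos: "s > 0" using Mpos s_def by simp
      have ss: "s * s = M$a$a" using Maa s_def by simp
      define u where "u = (1 / s) *\<^sub>R (M *v e)"
      define M' where "M' = M - outer u u"
      have uent: "u $ i = M$i$a / s" for i
        by (simp add: u_def e_def mv_axis_entry)
      have M'ent: "M' $ i $ j = M$i$j - M$i$a * M$j$a / M$a$a" for i j
        by (simp add: M'_def outer_entry uent ss[symmetric])
      have supp': "\<forall>i j. i \<notin> S \<or> j \<notin> S \<longrightarrow> M' $ i $ j = 0"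
      proof (intro allI impI)
        fix i j assume ij: "i \<notin> S \<or> j \<notin> S"
        show "M'$i$j = 0"
        proof (cases "i = a")
          case True
          then show ?thesis using M'ent Mpos sym_entry[OF symM, of a j] by simp
        next
          case ia: False
          show ?thesis
          proof (cases "j = a")
            case True
            then show ?thesis using M'ent Mpos by simp
          next
            case False
            then show ?thesis using ij ia M'ent supp[of i j] supp[of i a] supp[of j a] by auto
          qed
        qed
      qed
      have symM': "symmetric_mat M'"
        using symM psd_sym[OF psd_outer[of u]]
        unfolding M'_def symmetric_mat_def by (simp add: transpose_diff)
      have "0 \<le> x \<bullet> (M' *v x)" for x
      proof -
        have ux: "u \<bullet> x = (e \<bullet> (M *v x)) / s"
          using sym_mv[OF symM, of e x] by (simp add: u_def)
        have cs: "(e \<bullet> (M *v x))^2 \<le> (x \<bullet> (M *v x)) * M$a$a"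
          using psd_cs[OF psdM, of e x] eMe by simp
        have "x \<bullet> (M' *v x) = x \<bullet> (M *v x) - (u \<bullet> x)^2"
          by (simp add: M'_def matrix_vector_mult_diff_rdistrib outer_mv inner_diff_right
              power2_eq_square inner_commute)
        also have "\<dots> = x \<bullet> (M *v x) - (e \<bullet> (M *v x))^2 / M$a$a"
          using ux ss by (simp add: power_divide power2_eq_square)
        also have "\<dots> \<ge> 0"
          using cs Mpos by (simp add: field_simps)
        finally show ?thesis by simp
      qed
      then have psdM': "psd M'" using symM' unfolding psd_def by blast
      obtain N :: nat and w where Nw: "M' = (\<Sum>k<N. outer (w k) (w k))" "\<And>k. k<N \<Longrightarrow> \<exists>v. w k = M' *v v"
        using insert.IH psdM' supp' by blast
      define w' where "w' = (\<lambda>k. if k < N then w k else u)"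
      have "M = M' + outer u u" by (simp add: M'_def)
      also have "\<dots> = (\<Sum>k<Suc N. outer (w' k) (w' k))"
        using Nw(1) by (simp add: w'_def)
      finally have eq: "M = (\<Sum>k<Suc N. outer (w' k) (w' k))" .
      have rng: "\<exists>v. w' k = M *v v" if "k < Suc N" for k
      proof (cases "k < N")
        case True
        then obtain v where v: "w k = M' *v v" using Nw(2) by blast
        have "M' *v v = M *v (v - ((u \<bullet> v) / s) *\<^sub>R e)"
          by (simp add: M'_def matrix_vector_mult_diff_rdistrib outer_mv matrix_vector_right_distrib
              mv_scale u_def inner_commute matrix_vector_mult_diff_distrib)
        then show ?thesis using True v w'_def by auto
      next
        case False
        have "u = M *v ((1/s) *\<^sub>R e)" by (simp add: u_def mv_scale)
        then show ?thesis using False w'_def by auto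
      qed
      show ?thesis using eq rng by blast
    qed
  qed
qed

lemma psd_decomp:
  assumes "psd (M::real^'n^'n)"
  obtains N :: nat and u where "M = (\<Sum>k<N. outer (u k) (u k))" "\<And>k. k<N \<Longrightarrow> \<exists>v. u k = M *v v"
proof -
  have fin: "finite (UNIV::'n set)" by simp
  have "\<exists>(N::nat) u. M = (\<Sum>k<N. outer (u k) (u k)) \<and> (\<forall>k<N. \<exists>v. u k = M *v v)"
    using psd_decomp_aux[of "UNIV::'n set", OF fin] assms by blast
  then show ?thesis using that by blast
qed

lemma sum_mv: "(\<Sum>k\<in>I. f k) *v x = (\<Sum>k\<in>I. f k *v (x::real^'n))"
  by (induction I rule: infinite_finite_induct) (auto simp: matrix_vector_mult_add_rdistrib)

lemma mv_sum: "B *v (\<Sum>k\<in>I. g k) = (\<Sum>k\<in>I. B *v (g k::real^'n))"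
  by (induction I rule: infinite_finite_induct) (auto simp: matrix_vector_right_distrib)

lemma psd_inner_nonneg:
  assumes "psd A" "psd B"
  shows "0 \<le> A \<bullet> B"
proof -
  obtain N :: nat and u where A: "A = (\<Sum>k<N. outer (u k) (u k))"
    using psd_decomp[OF assms(1)] by blast
  have "A \<bullet> B = (\<Sum>k<N. u k \<bullet> (B *v u k))"
    by (simp add: A inner_sum_left inner_outer')
  also have "\<dots> \<ge> 0" by (intro sum_nonneg psd_nonneg[OF assms(2)])
  finally show ?thesis .
qed

lemma psd_inner_zero_mult:
  fixes A B :: "real^'n^'n"
  assumes "psd A" "psd B" "A \<bullet> B = 0"
  shows "B ** A = 0"
proof -
  obtain N :: nat and u where A: "A = (\<Sum>k<N. outer (u k) (u k))"
    using psd_decomp[OF assms(1)] by blast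
  have "A \<bullet> B = (\<Sum>k<N. u k \<bullet> (B *v u k))"
    by (simp add: A inner_sum_left inner_outer')
  then have "(\<Sum>k<N. u k \<bullet> (B *v u k)) = 0" using assms(3) by simp
  then have "\<forall>k\<in>{..<N}. u k \<bullet> (B *v u k) = 0"
    using sum_nonneg_eq_0_iff[of "{..<N}" "\<lambda>k. u k \<bullet> (B *v u k)"] psd_nonneg[OF assms(2)] by simp
  then have Bu: "B *v u k = 0" if "k < N" for k
    using psd_zero_form[OF assms(2)] that by blast
  show ?thesis
  proof (subst matrix_eq, intro allI)
    fix x :: "real^'n"
    have "B ** A *v x = B *v (A *v x)" by (simp add: matrix_vector_mul_assoc)
    also have "\<dots> = (\<Sum>k<N. (u k \<bullet> x) *\<^sub>R (B *v u k))"
      by (simp add: A sum_mv mv_sum outer_mv mv_scale)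
    also have "\<dots> = 0" using Bu by simp
    finally show "B ** A *v x = 0 *v x" by simp
  qed
qed

lemma psd_perp_T:
  assumes "psd P" "M \<in> T_S P"
  shows "P \<bullet> M = 0"
proof -
  obtain N :: nat and u where P: "P = (\<Sum>k<N. outer (u k) (u k))"
    and rng: "\<And>k. k < N \<Longrightarrow> \<exists>v. u k = P *v v"
    using psd_decomp[OF assms(1)] by blast
  have PMP: "P ** M ** P = 0" using assms(2) by (simp add: T_S_def)
  have z: "u k \<bullet> (M *v u k) = 0" if kN: "k < N" for k
  proof -
    obtain v where v: "u k = P *v v" using rng kN by blast
    have "u k \<bullet> (M *v u k) = (P *v v) \<bullet> (M *v (P *v v))" by (simp add: v)
    also have "\<dots> = v \<bullet> (P *v (M *v (P *v v)))"
      using sym_mv[OF psd_sym[OF assms(1)]] by simp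
    also have "\<dots> = v \<bullet> ((P ** M ** P) *v v)" by (simp add: matrix_vector_mul_assoc matrix_mul_assoc)
    also have "\<dots> = 0" by (simp add: PMP)
    finally show ?thesis .
  qed
  have "P \<bullet> M = (\<Sum>k<N. u k \<bullet> (M *v u k))"
    by (simp add: P inner_sum_left inner_outer')
  also have "\<dots> = 0" using z by simp
  finally show ?thesis .
qed



lemma mat_add_rdistrib: "(B + C) ** A = B ** A + C ** (A::real^'n^'n)"
  by (simp add: matrix_matrix_mult_def vec_eq_iff sum.distrib algebra_simps)

lemma subspace_T_S: "subspace (T_S P)"
  unfolding subspace_def T_S_def symmetric_mat_def
  by (auto simp: transpose_zero transpose_add transpose_scalar matrix_add_ldistrib mat_add_rdistrib
      matrix_scalar_ac scalar_matrix_assoc[symmetric])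

lemma T_X_eq: "T_X = T_S"
  by (simp add: fun_eq_iff T_X_def T_S_def)

lemma proj_sub_orth:
  fixes V :: "'a::euclidean_space set"
  assumes "subspace V" "v \<in> V"
  shows "(x - closest_point V x) \<bullet> v = 0"
proof -
  have cv: "convex V" using assms(1) by (simp add: subspace_imp_convex)
  have cl: "closed V" using assms(1) by (simp add: closed_subspace)
  have ne: "V \<noteq> {}" using assms(2) by auto
  define p where "p = closest_point V x"
  have pV: "p \<in> V" using closest_point_in_set[OF cl ne] p_def by simp
  have "p + v \<in> V" using pV assms by (simp add: subspace_add)
  then have "(x - p) \<bullet> ((p + v) - p) \<le> 0" using closest_point_dot[OF cv cl] p_def by blast
  moreover have "p - v \<in> V" using pV assms by (simp add: subspace_diff)
  then have "(x - p) \<bullet> ((p - v) - p) \<le> 0" using closest_point_dot[OF cv cl] p_def by blast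
  ultimately show ?thesis using p_def by (simp add: inner_diff_right)
qed

lemma proj_sub_char:
  fixes V :: "'a::euclidean_space set"
  assumes "subspace V" "p \<in> V" "\<And>v. v \<in> V \<Longrightarrow> (x - p) \<bullet> v = 0"
  shows "closest_point V x = p"
proof -
  have cv: "convex V" using assms(1) by (simp add: subspace_imp_convex)
  have cl: "closed V" using assms(1) by (simp add: closed_subspace)
  have "dist x p \<le> dist x z" if "z \<in> V" for z
  proof -
    have pz: "p - z \<in> V" using assms(1,2) that by (simp add: subspace_diff)
    have "(dist x z)^2 = (norm ((x - p) + (p - z)))^2" by (simp add: dist_norm)
    also have "\<dots> = (norm (x - p))^2 + (norm (p - z))^2"
      using assms(3)[OF pz] by (intro norm_add_Pythagorean) (simp add: orthogonal_def)
    finally have "(dist x p)^2 \<le> (dist x z)^2" by (simp add: dist_norm)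
    then show ?thesis by (rule power2_le_imp_le) simp
  qed
  then show ?thesis using closest_point_unique[OF cv cl assms(2)] by auto
qed

lemma proj_sub_linear:
  fixes V :: "'a::euclidean_space set"
  assumes "subspace V"
  shows "linear (closest_point V)"
proof -
  have cl: "closed V" using assms(1) by (simp add: closed_subspace)
  have ne: "V \<noteq> {}" using assms(1) subspace_0 by blast
  have inV: "closest_point V x \<in> V" for x using closest_point_in_set[OF cl ne] .
  have orth: "(x - closest_point V x) \<bullet> v = 0" if "v \<in> V" for x v
    using proj_sub_orth[OF assms that] .
  show ?thesis
  proof (rule linearI)
    fix a b
    show "closest_point V (a + b) = closest_point V a + closest_point V b"
    proof (rule proj_sub_char[OF assms])
      show "closest_point V a + closest_point V b \<in> V" using inV assms by (simp add: subspace_add)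
      fix v assume "v \<in> V"
      then show "(a + b - (closest_point V a + closest_point V b)) \<bullet> v = 0"
        using orth[of v a] orth[of v b] by (simp add: algebra_simps inner_add_left inner_diff_left)
    qed
  next
    fix r a
    show "closest_point V (r *\<^sub>R a) = r *\<^sub>R closest_point V a"
    proof (rule proj_sub_char[OF assms])
      show "r *\<^sub>R closest_point V a \<in> V" using inV assms by (simp add: subspace_scale)
      fix v assume "v \<in> V"
      then show "(r *\<^sub>R a - r *\<^sub>R closest_point V a) \<bullet> v = 0"
        using orth[of v a] by (simp add: scaleR_diff_right[symmetric] inner_diff_left)
    qed
  qed
qed

lemma local_psd:
  fixes P :: "real^'n^'n"
  assumes psdP: "psd P"
  shows "\<exists>c>0. \<forall>X. symmetric_mat X \<longrightarrow> (\<forall>M\<in>T_S P. (X - P) \<bullet> M = 0) \<longrightarrow> norm (X - P) \<le> c \<longrightarrow> psd X"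
proof -
  have symP: "symmetric_mat P" using psd_sym[OF psdP] .
  define U where "U = range ((*v) P)"
  have subU: "subspace U" unfolding U_def
    by (rule real_vector.linear_subspace_image[OF matrix_vector_mul_linear subspace_UNIV])
  have clU: "closed U" using subU by (simp add: closed_subspace)
  have injU: "\<forall>p\<in>U. P *v p = 0 \<longrightarrow> p = 0"
  proof (intro ballI impI)
    fix p assume "p \<in> U" "P *v p = 0"
    then obtain v where v: "p = P *v v" unfolding U_def by blast
    have "p \<bullet> p = v \<bullet> (P *v p)" using sym_mv[OF symP] v by simp
    then show "p = 0" using \<open>P *v p = 0\<close> by simp
  qed
  obtain e where e: "e > 0" "\<forall>p\<in>U. norm (P *v p) \<ge> e * norm p"
    using injective_imp_isometric[OF clU subU matrix_vector_mul_bounded_linear injU] by blast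
  obtain B where B: "B > 0" "\<And>x. norm (P *v x) \<le> B * norm x"
    using linear_bounded_pos[OF matrix_vector_mul_linear] by blast
  define c where "c = e^2 / B"
  have cpos: "c > 0" using e B c_def by simp
  have quad: "c * (norm p)^2 \<le> p \<bullet> (P *v p)" if "p \<in> U" for p
  proof -
    define y where "y = P *v p"
    have ep: "e * norm p \<le> norm y" using e(2) that y_def by blast
    have q0: "0 \<le> p \<bullet> (P *v p)" using psd_nonneg[OF psdP] .
    have "norm y ^ 2 \<le> B * (p \<bullet> (P *v p))"
    proof (cases "y = 0")
      case True then show ?thesis using q0 B by simp
    next
      case False
      have cs: "(y \<bullet> (P *v p))^2 \<le> (p \<bullet> (P *v p)) * (y \<bullet> (P *v y))"
        using psd_cs[OF psdP] .
      have yy: "y \<bullet> (P *v p) = norm y ^ 2" by (simp add: y_def power2_norm_eq_inner)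
      have "y \<bullet> (P *v y) \<le> norm y * norm (P *v y)" by (rule norm_cauchy_schwarz)
      also have "\<dots> \<le> norm y * (B * norm y)" using B(2)[of y] by (simp add: mult_left_mono)
      finally have yPy: "y \<bullet> (P *v y) \<le> B * norm y ^ 2" by (simp add: power2_eq_square mult_ac)
      define n2 where "n2 = norm y ^ 2"
      define qq where "qq = p \<bullet> (P *v p)"
      have "n2^2 \<le> qq * (B * n2)"
        using cs yy yPy q0 unfolding n2_def qq_def by (metis mult_left_mono order_trans)
      then have "n2 * n2 \<le> (B * qq) * n2"
        by (simp add: power2_eq_square mult_ac)
      moreover have "n2 > 0" using False n2_def by simp
      ultimately have "n2 \<le> B * qq" by (rule mult_right_le_imp_le)
      then show ?thesis unfolding n2_def qq_def .
    qed
    moreover have "(e * norm p)^2 \<le> norm y ^ 2"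
      using ep e(1) by (simp add: power_mono)
    ultimately have "e^2 * (norm p)^2 \<le> B * (p \<bullet> (P *v p))" by (simp add: power_mult_distrib)
    then show ?thesis using B(1) unfolding c_def by (simp add: field_simps)
  qed
  show ?thesis
  proof (intro exI[of _ c] conjI allI impI cpos)
    fix X :: "real^'n^'n"
    assume symX: "symmetric_mat X" and perp: "\<forall>M\<in>T_S P. (X - P) \<bullet> M = 0" and small: "norm (X - P) \<le> c"
    define D where "D = X - P"
    have symD: "symmetric_mat D" using symX symP unfolding D_def symmetric_mat_def by (simp add: transpose_diff)
    have "0 \<le> x \<bullet> (X *v x)" for x
    proof -
      obtain p q where pq: "p \<in> span U" "\<And>w. w \<in> span U \<Longrightarrow> orthogonal q w" "x = p + q"
        using orthogonal_subspace_decomp_exists[of U x] by blast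
      have pU: "p \<in> U" using pq(1) subU by (simp add: real_vector.span_eq_iff[THEN iffD2])
      have qperp: "q \<bullet> (P *v w) = 0" for w
      proof -
        have "P *v w \<in> U" unfolding U_def by simp
        then have "P *v w \<in> span U" using subU by (simp add: real_vector.span_eq_iff[THEN iffD2])
        then show ?thesis using pq(2) unfolding orthogonal_def by blast
      qed
      have Pq: "P *v q = 0"
      proof -
        have "(P *v q) \<bullet> (P *v q) = q \<bullet> (P *v (P *v q))" using sym_mv[OF symP] by simp
        then show ?thesis using qperp by simp
      qed
      have Dq: "D *v q = 0"
      proof -
        have "w \<bullet> (D *v q) = 0" for w
        proof -
          define M where "M = outer q w + outer w q"
          have "symmetric_mat M" unfolding M_def symmetric_mat_def
            by (simp add: transpose_add outer_def transpose_def vec_eq_iff mult.commute)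
          moreover have "P ** M ** P = 0"
          proof (subst matrix_eq, intro allI)
            fix z :: "real^'n"
            have "P ** M ** P *v z = P *v (M *v (P *v z))" by (simp add: matrix_vector_mul_assoc matrix_mul_assoc)
            also have "\<dots> = 0"
              using Pq qperp[of z] sym_mv[OF symP, of q z]
              by (simp add: M_def matrix_vector_mult_add_rdistrib outer_mv matrix_vector_right_distrib mv_scale inner_commute)
            finally show "P ** M ** P *v z = 0 *v z" by simp
          qed
          ultimately have "M \<in> T_S P" by (simp add: T_S_def)
          then have "D \<bullet> M = 0" using perp D_def by blast
          moreover have "D \<bullet> M = q \<bullet> (D *v w) + w \<bullet> (D *v q)"
            by (simp add: M_def inner_add_right inner_outer)
          moreover have "q \<bullet> (D *v w) = w \<bullet> (D *v q)"
            using sym_mv[OF symD, of q w] by (simp add: inner_commute)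
          ultimately show ?thesis by simp
        qed
        from this[of "D *v q"] show ?thesis by simp
      qed
      have X: "X = P + D" by (simp add: D_def)
      have "x \<bullet> (X *v x) = (p + q) \<bullet> (P *v p + D *v p)"
        using Pq Dq by (simp add: X pq(3) matrix_vector_mult_add_rdistrib matrix_vector_right_distrib)
      also have "\<dots> = p \<bullet> (P *v p) + p \<bullet> (D *v p) + (q \<bullet> (P *v p) + q \<bullet> (D *v p))"
        by (simp add: inner_add_left inner_add_right)
      also have "q \<bullet> (P *v p) = 0" using qperp by simp
      also have "q \<bullet> (D *v p) = 0" using sym_mv[OF symD, of q p] Dq by simp
      finally have eq: "x \<bullet> (X *v x) = p \<bullet> (P *v p) + p \<bullet> (D *v p)" by simp
      have "\<bar>p \<bullet> (D *v p)\<bar> \<le> norm D * (norm p)^2"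
      proof -
        have "p \<bullet> (D *v p) = D \<bullet> outer p p" by (simp add: inner_outer)
        also have "\<bar>\<dots>\<bar> \<le> norm D * norm (outer p p)" by (rule Cauchy_Schwarz_ineq2)
        finally show ?thesis by (simp add: norm_outer power2_eq_square)
      qed
      moreover have "norm D * (norm p)^2 \<le> c * (norm p)^2"
        using small D_def by (simp add: mult_right_mono)
      moreover have "c * (norm p)^2 \<le> p \<bullet> (P *v p)" using quad[OF pU] .
      ultimately show ?thesis using eq by linarith
    qed
    then show "psd X" using symX by (simp add: psd_def)
  qed
qed



lemma subspace_sym: "subspace {M::real^'n^'n. symmetric_mat M}"
  unfolding subspace_def symmetric_mat_def
  by (auto simp: transpose_zero transpose_add transpose_scalar)

lemma psd_cone_eq: "psd_cone = {M::real^'n^'n. symmetric_mat M} \<inter> (\<Inter>x. {M. 0 \<le> outer x x \<bullet> M})"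
  by (auto simp: psd_cone_def psd_def inner_outer')

lemma closed_psd_cone: "closed (psd_cone :: (real^'n^'n) set)"
  unfolding psd_cone_eq
  by (intro closed_Int closed_subspace[OF subspace_sym] closed_INT ballI closed_halfspace_ge)

lemma psd_add: "psd A \<Longrightarrow> psd B \<Longrightarrow> psd (A + B)"
  unfolding psd_def symmetric_mat_def
  by (auto simp: transpose_add matrix_vector_mult_add_rdistrib inner_add_right intro: add_nonneg_nonneg)

lemma psd_scale: "psd A \<Longrightarrow> 0 \<le> c \<Longrightarrow> psd (c *\<^sub>R A)"
  unfolding psd_def symmetric_mat_def
  by (auto simp: transpose_scalar scaleR_matrix_vector_assoc[symmetric])

lemma psd_zero: "psd (0::real^'n^'n)"
  unfolding psd_def symmetric_mat_def by (simp add: transpose_zero)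

lemma convex_psd_cone: "convex (psd_cone :: (real^'n^'n) set)"
  unfolding convex_def psd_cone_def by (auto intro: psd_add psd_scale)

lemma psd_cone_ne: "psd_cone \<noteq> {}"
  using psd_zero unfolding psd_cone_def by blast

lemma proj_psd_psd: "psd (proj_psd Z)"
  using closest_point_in_set[OF closed_psd_cone psd_cone_ne] unfolding proj_psd_def psd_cone_def by blast

lemma proj_psd_dot: "psd Y \<Longrightarrow> (Z - proj_psd Z) \<bullet> (Y - proj_psd Z) \<le> 0"
  using closest_point_dot[OF convex_psd_cone closed_psd_cone] unfolding proj_psd_def psd_cone_def by blast

lemma proj_psd_orth: "(Z - proj_psd Z) \<bullet> proj_psd Z = 0"
proof -
  have "(Z - proj_psd Z) \<bullet> (0 - proj_psd Z) \<le> 0" using proj_psd_dot[OF psd_zero] .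
  moreover have "(Z - proj_psd Z) \<bullet> (2 *\<^sub>R proj_psd Z - proj_psd Z) \<le> 0"
    using proj_psd_dot[OF psd_scale[OF proj_psd_psd[of Z], of 2], of Z] by simp
  ultimately show ?thesis by (simp add: inner_diff_right algebra_simps)
qed

lemma proj_psd_polar: "psd Y \<Longrightarrow> (Z - proj_psd Z) \<bullet> Y \<le> 0"
  using proj_psd_dot[of Y Z] proj_psd_orth[of Z] by (simp add: inner_diff_right)

lemma proj_char:
  assumes "psd X" "psd S" "X \<bullet> S = 0"
  shows "proj_psd (X - S) = X"
proof -
  have "dist (X - S) X \<le> dist (X - S) Y" if "Y \<in> psd_cone" for Y
  proof -
    have Y: "psd Y" using that by (simp add: psd_cone_def)
    have "(dist (X - S) Y)^2 = (norm ((X - Y) - S))^2" by (simp add: dist_norm algebra_simps)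
    also have "\<dots> = (norm (X - Y))^2 - 2 * ((X - Y) \<bullet> S) + (norm S)^2"
      by (simp add: power2_norm_eq_inner inner_diff_left inner_diff_right inner_commute)
    also have "\<dots> = (norm (X - Y))^2 + 2 * (Y \<bullet> S) + (norm S)^2"
      using assms(3) by (simp add: inner_diff_left)
    also have "\<dots> \<ge> (norm S)^2" using psd_inner_nonneg[OF Y assms(2)] by simp
    finally have "(dist (X - S) X)^2 \<le> (dist (X - S) Y)^2" by (simp add: dist_norm)
    then show ?thesis by (rule power2_le_imp_le) simp
  qed
  then show ?thesis
    unfolding proj_psd_def
    using closest_point_unique[OF convex_psd_cone closed_psd_cone] assms(1) psd_cone_def by fastforce
qed

lemma moreau:
  assumes "symmetric_mat Z"
  shows "proj_psd (- Z) = proj_psd Z - Z"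
proof -
  define W where "W = proj_psd Z - Z"
  have symW: "symmetric_mat W"
    using assms psd_sym[OF proj_psd_psd[of Z]] unfolding W_def symmetric_mat_def by (simp add: transpose_diff)
  have "0 \<le> x \<bullet> (W *v x)" for x
  proof -
    have "x \<bullet> (W *v x) = - ((Z - proj_psd Z) \<bullet> outer x x)"
      by (simp add: W_def inner_outer[symmetric] inner_diff_left)
    then show ?thesis using proj_psd_polar[OF psd_outer[of x], of Z] by simp
  qed
  then have psdW: "psd W" using symW psd_def by blast
  have "W \<bullet> proj_psd Z = 0" using proj_psd_orth[of Z] unfolding W_def
    by (simp add: inner_diff_left)
  then have "proj_psd (W - proj_psd Z) = W"
    using proj_char[OF psdW proj_psd_psd] by simp
  moreover have "W - proj_psd Z = - Z" by (simp add: W_def)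
  ultimately show ?thesis by (simp add: W_def)
qed



lemma linear_Aop: "linear (Aop Ai)"
  by (rule linearI) (simp_all add: Aop_def vec_eq_iff inner_add_right)

lemma linear_Astar: "linear (Astar Ai)"
  by (rule linearI) (simp_all add: Astar_def scaleR_add_left sum.distrib scaleR_sum_right)

lemma inner_chi: "(y::real^'m) \<bullet> (\<chi> i. g i) = (\<Sum>i\<in>UNIV. y$i * g i)"
  by (simp add: inner_vec_def)

lemma adjoint_A: "Astar Ai y \<bullet> X = y \<bullet> Aop Ai X"
  unfolding Astar_def Aop_def inner_chi by (simp add: inner_sum_left)

lemma sym_Astar:
  assumes "\<And>i. symmetric_mat (Ai i)"
  shows "symmetric_mat (Astar Ai y)"
  using assms unfolding symmetric_mat_def Astar_def by (simp add: transpose_sum transpose_scalar)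

lemma AAinv_props:
  fixes Ai :: "'m::finite \<Rightarrow> real^'n^'n"
  assumes surjA: "\<forall>v. \<exists>X. symmetric_mat X \<and> Aop Ai X = v"
  shows "AAinv Ai (Aop Ai (Astar Ai v)) = v" "Aop Ai (Astar Ai (AAinv Ai w)) = w"
proof -
  define G where "G = matrix (\<lambda>v. Aop Ai (Astar Ai v))"
  have lin: "linear (\<lambda>v. Aop Ai (Astar Ai v))"
    using linear_compose[OF linear_Astar linear_Aop] by (simp add: o_def)
  have Gv: "G *v v = Aop Ai (Astar Ai v)" for v
    using matrix_vector_mul(2)[OF lin] unfolding G_def by metis
  have ker: "\<forall>x. G *v x = 0 \<longrightarrow> x = 0"
  proof (intro allI impI)
    fix x assume "G *v x = 0"
    then have "Aop Ai (Astar Ai x) = 0" using Gv by simp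
    then have "Astar Ai x \<bullet> Astar Ai x = 0" using adjoint_A[of Ai x "Astar Ai x"] by simp
    then have z: "Astar Ai x = 0" by simp
    obtain X where "Aop Ai X = x" using surjA by blast
    then have "x \<bullet> x = Astar Ai x \<bullet> X" using adjoint_A[of Ai x X] by simp
    then show "x = 0" using z by simp
  qed
  then obtain B where B: "B ** G = mat 1" using matrix_left_invertible_ker by blast
  then have "G ** B = mat 1" using matrix_left_right_inverse by blast
  then have ex: "\<exists>A'. G ** A' = mat 1 \<and> A' ** G = mat 1" using B by blast
  have inv: "G ** matrix_inv G = mat 1 \<and> matrix_inv G ** G = mat 1"
    unfolding matrix_inv_def using someI_ex[OF ex] .
  have AA: "AAinv Ai y = matrix_inv G *v y" for y
    by (simp add: AAinv_def G_def)
  show "AAinv Ai (Aop Ai (Astar Ai v)) = v"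
    using inv by (simp add: AA Gv[symmetric] matrix_vector_mul_assoc)
  show "Aop Ai (Astar Ai (AAinv Ai w)) = w"
    using inv by (simp add: AA Gv[symmetric] matrix_vector_mul_assoc)
qed

lemma linear_AAinv: "linear (AAinv Ai)"
  unfolding AAinv_def by (rule matrix_vector_mul_linear)

lemma hoffman:
  fixes f :: "'a::euclidean_space \<Rightarrow> 'b::euclidean_space"
  assumes lf: "linear f" and x1: "f x1 = c"
  shows "\<exists>\<kappa>>0. \<forall>x. \<exists>x'. f x' = c \<and> norm (x - x') \<le> \<kappa> * norm (f x - c)"
proof -
  define K where "K = {x. f x = 0}"
  have subK: "subspace K" unfolding K_def
    using lf by (simp add: subspace_def real_vector.linear_add real_vector.linear_scale real_vector.linear_0)
  define s where "s = {z. \<forall>w\<in>K. z \<bullet> w = 0}"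
  have subs: "subspace s" unfolding s_def subspace_def
    by (auto simp: inner_add_left)
  have cls: "closed s" using subs by (simp add: closed_subspace)
  have inj: "\<forall>z\<in>s. f z = 0 \<longrightarrow> z = 0"
  proof (intro ballI impI)
    fix z assume "z \<in> s" "f z = 0"
    then have "z \<in> K" "\<forall>w\<in>K. z \<bullet> w = 0" unfolding K_def s_def by auto
    then show "z = 0" by (metis inner_eq_zero_iff)
  qed
  have bl: "bounded_linear f" using lf by (simp add: linear_conv_bounded_linear)
  obtain e where e: "e > 0" "\<forall>z\<in>s. norm (f z) \<ge> e * norm z"
    using injective_imp_isometric[OF cls subs bl inj] by blast
  show ?thesis
  proof (intro exI[of _ "1/e"] conjI allI)
    show "1/e > 0" using e by simp
    fix x
    obtain y z where yz: "y \<in> span K" "\<And>w. w \<in> span K \<Longrightarrow> orthogonal z w" "x - x1 = y + z"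
      using orthogonal_subspace_decomp_exists[of K "x - x1"] by blast
    have yK: "y \<in> K" using yz(1) subK by (simp add: real_vector.span_eq_iff[THEN iffD2])
    have zs: "z \<in> s" unfolding s_def using yz(2) subK
      by (simp add: real_vector.span_eq_iff[THEN iffD2] orthogonal_def)
    have fy: "f y = 0" using yK K_def by simp
    have xeq: "x = x1 + y + z" using yz(3) by (simp add: algebra_simps)
    have fz: "f z = f x - c" using fy x1 xeq lf by (simp add: real_vector.linear_add)
    show "\<exists>x'. f x' = c \<and> norm (x - x') \<le> 1 / e * norm (f x - c)"
    proof (intro exI[of _ "x1 + y"] conjI)
      show "f (x1 + y) = c" using x1 fy lf by (simp add: real_vector.linear_add)
      have "e * norm z \<le> norm (f x - c)" using e(2) zs fz by metis
      then have "norm z \<le> norm (f x - c) / e" using e(1) by (simp add: field_simps)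
      then show "norm (x - (x1 + y)) \<le> 1 / e * norm (f x - c)" using xeq by simp
    qed
  qed
qed



definition Pm :: "('m::finite \<Rightarrow> real^'n^'n) \<Rightarrow> real^'n^'n \<Rightarrow> real^'n^'n" where
  "Pm Ai W = Astar Ai (AAinv Ai (Aop Ai W))"

lemma linear_Pm: "linear (Pm Ai)"
  unfolding Pm_def
  using linear_compose[OF linear_compose[OF linear_Aop linear_AAinv] linear_Astar] by (simp add: o_def)

lemma Pm_diff: "Pm Ai (A - B) = Pm Ai A - Pm Ai B"
  using real_vector.linear_diff[OF linear_Pm] by blast
lemma Pm_add: "Pm Ai (A + B) = Pm Ai A + Pm Ai B"
  using real_vector.linear_add[OF linear_Pm] by blast
lemma Pm_scale: "Pm Ai (c *\<^sub>R A) = c *\<^sub>R Pm Ai A"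
  using real_vector.linear_scale[OF linear_Pm] by blast
lemma Pm_neg: "Pm Ai (- A) = - Pm Ai A"
  using real_vector.linear_neg[OF linear_Pm] by blast

lemma Astar_diff: "Astar Ai (a - b) = Astar Ai a - Astar Ai b"
  using real_vector.linear_diff[OF linear_Astar] by blast
lemma Aop_diff: "Aop Ai (a - b) = Aop Ai a - Aop Ai b"
  using real_vector.linear_diff[OF linear_Aop] by blast
lemma AAinv_diff: "AAinv Ai (a - b) = AAinv Ai a - AAinv Ai b"
  using real_vector.linear_diff[OF linear_AAinv] by blast

context
  fixes Ai :: "'m::finite \<Rightarrow> real^'n^'n"
  assumes surjA: "\<forall>v. \<exists>X. symmetric_mat X \<and> Aop Ai X = v"
begin

lemma Aop_Pm: "Aop Ai (Pm Ai W) = Aop Ai W"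
  unfolding Pm_def using AAinv_props(2)[OF surjA] by simp

lemma Pm_Astar: "Pm Ai (Astar Ai y) = Astar Ai y"
  unfolding Pm_def using AAinv_props(1)[OF surjA] by simp

lemma Q_orth: "(W - Pm Ai W) \<bullet> Astar Ai y = 0"
  by (simp add: inner_commute[of _ "Astar Ai y"] adjoint_A Aop_diff Aop_Pm)

lemma admm_res:
  fixes b :: "real^'m" and C Z :: "real^'n^'n" and \<sigma> :: real
  assumes Z: "Z = proj_psd Z - proj_psd (- Z)"
  shows "admm_map Ai b C \<sigma> Z - Z =
     (Astar Ai (AAinv Ai b) - Pm Ai (proj_psd Z))
     + ((proj_psd (- Z) - Pm Ai (proj_psd (- Z))) - \<sigma> *\<^sub>R (C - Pm Ai C))"
proof -
  define X where "X = proj_psd Z"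
  define W where "W = proj_psd (- Z)"
  have "Z - 2 *\<^sub>R X = - X - W" using Z X_def W_def by (simp add: algebra_simps scaleR_2)
  then have e: "Astar Ai (AAinv Ai (Aop Ai (Z - 2 *\<^sub>R X))) = - Pm Ai X - Pm Ai W"
    by (simp add: Pm_def[symmetric] Pm_diff Pm_neg)
  have e2: "Astar Ai (AAinv Ai (Aop Ai C)) = Pm Ai C" by (simp add: Pm_def)
  show ?thesis
    unfolding admm_map_def X_def[symmetric] W_def[symmetric] e e2
    using Z X_def W_def by (simp add: algebra_simps)
qed

lemma res_orth:
  "(Astar Ai (AAinv Ai b) - Pm Ai X) \<bullet> ((W - Pm Ai W) - \<sigma> *\<^sub>R (C - Pm Ai C)) = 0"
proof -
  have e1: "(W - Pm Ai W) - \<sigma> *\<^sub>R (C - Pm Ai C) = (W - \<sigma> *\<^sub>R C) - Pm Ai (W - \<sigma> *\<^sub>R C)"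
    by (simp add: Pm_diff Pm_scale algebra_simps)
  have e2: "Astar Ai (AAinv Ai b) - Pm Ai X = Astar Ai (AAinv Ai b - AAinv Ai (Aop Ai X))"
    by (simp add: Pm_def Astar_diff)
  show ?thesis unfolding e1 e2 using Q_orth by (simp add: inner_commute)
qed

lemma fixed_point:
  fixes b :: "real^'m" and C X S :: "real^'n^'n" and \<sigma> :: real
  assumes "\<sigma> > 0" "psd X" "psd S" "X \<bullet> S = 0" "Aop Ai X = b" "S - Pm Ai S = C - Pm Ai C"
  shows "X - \<sigma> *\<^sub>R S \<in> admm_fixed Ai b C \<sigma>"
proof -
  have psdS: "psd (\<sigma> *\<^sub>R S)" using psd_scale[OF assms(3)] assms(1) by simp
  have o1: "X \<bullet> (\<sigma> *\<^sub>R S) = 0" using assms(4) by simp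
  have p1: "proj_psd (X - \<sigma> *\<^sub>R S) = X" using proj_char[OF assms(2) psdS o1] .
  have p2: "proj_psd (- (X - \<sigma> *\<^sub>R S)) = \<sigma> *\<^sub>R S"
    using proj_char[OF psdS assms(2)] o1 by (simp add: inner_commute)
  have Z: "X - \<sigma> *\<^sub>R S = proj_psd (X - \<sigma> *\<^sub>R S) - proj_psd (- (X - \<sigma> *\<^sub>R S))"
    using p1 p2 by simp
  have PX: "Pm Ai X = Astar Ai (AAinv Ai b)" by (simp add: Pm_def assms(5))
  have "admm_map Ai b C \<sigma> (X - \<sigma> *\<^sub>R S) - (X - \<sigma> *\<^sub>R S) = 0"
    unfolding admm_res[OF Z] p1 p2 PX
    using assms(6) by (simp add: Pm_scale scaleR_diff_right[symmetric])
  then show ?thesis by (simp add: admm_fixed_def)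
qed

end



lemma norm_fst_pair: "norm a \<le> norm (a, b)"
  by (simp add: norm_prod_def real_sqrt_le_mono[of "(norm a)^2", simplified] )

lemma norm_snd_pair: "norm b \<le> norm (a, b)"
  by (simp add: norm_prod_def real_sqrt_le_mono[of "(norm b)^2", simplified] )

lemma sym_add: "symmetric_mat A \<Longrightarrow> symmetric_mat B \<Longrightarrow> symmetric_mat (A + B)"
  using subspace_add[OF subspace_sym] by blast
lemma sym_diff: "symmetric_mat A \<Longrightarrow> symmetric_mat B \<Longrightarrow> symmetric_mat (A - B)"
  using subspace_diff[OF subspace_sym] by blast
lemma sym_scale: "symmetric_mat A \<Longrightarrow> symmetric_mat (c *\<^sub>R A)"
  using subspace_scale[OF subspace_sym] by blast

lemma admm_sym:
  assumes "\<And>i. symmetric_mat (Ai i)" "symmetric_mat C" "symmetric_mat Z"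
  shows "symmetric_mat (admm_map Ai b C \<sigma> Z)"
  unfolding admm_map_def
  by (intro sym_add sym_diff sym_scale sym_Astar assms psd_sym[OF proj_psd_psd])



lemma norm_tuple_le:
  fixes a1 :: "'a::real_normed_vector" and a2 a3 a4 :: "'b::real_normed_vector" and z :: "'c::real_normed_vector"
  shows "norm (a1, a2, a3, a4, z, z') \<le> norm a1 + norm a2 + norm a3 + norm a4 + norm (z, z')"
  using norm_Pair_le[of a1 "(a2, a3, a4, z, z')"] norm_Pair_le[of a2 "(a3, a4, z, z')"]
    norm_Pair_le[of a3 "(a4, z, z')"] norm_Pair_le[of a4 "(z, z')"] by simp

theorem lemma8:
  fixes Ai :: "'m::finite \<Rightarrow> real^'n^'n" and b :: "real^'m" and C :: "real^'n^'n"
    and \<sigma> :: real and Z :: "nat \<Rightarrow> real^'n^'n"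
    and Xs Ss :: "real^'n^'n" and ys :: "real^'m"
  assumes Ai_sym: "\<And>i. symmetric_mat (Ai i)"
    and C_sym: "symmetric_mat C"
    and surjA: "\<forall>v. \<exists>X. symmetric_mat X \<and> Aop Ai X = v"
    and KKT_nonempty: "\<exists>X y S. KKT Ai b C X y S"
    and sigma_pos: "\<sigma> > 0"
    and Z0_sym: "symmetric_mat (Z 0)"
    and iter: "\<And>k. Z (Suc k) = admm_map Ai b C \<sigma> (Z k)"
    and convX: "(\<lambda>k. proj_psd (Z k)) \<longlonglongrightarrow> Xs"
    and convS: "(\<lambda>k. (1 / \<sigma>) *\<^sub>R proj_psd (- Z k)) \<longlonglongrightarrow> Ss"
    and KKTstar: "KKT Ai b C Xs ys Ss"
    and strict_compl: "rank Xs + rank Ss = CARD('n)"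
  shows "\<exists>kbar::nat. \<exists>\<alpha>>0. \<forall>k\<ge>kbar.
           infdist (Z k) (admm_fixed Ai b C \<sigma>)
             \<le> \<alpha> * (norm (Z (Suc k) - Z k)
                     + norm (closest_point (T_S Xs) (proj_psd (Z k)))
                     + \<sigma> * norm (closest_point (T_X Ss) ((1 / \<sigma>) *\<^sub>R proj_psd (- Z k))))"
proof -
  have symZ: "symmetric_mat (Z k)" for k
    by (induction k) (simp_all add: Z0_sym iter admm_sym[OF Ai_sym C_sym])
  define X where "X = (\<lambda>k. proj_psd (Z k))"
  define S where "S = (\<lambda>k. (1 / \<sigma>) *\<^sub>R proj_psd (- Z k))"
  have W: "proj_psd (- Z k) = \<sigma> *\<^sub>R S k" for k
    using sigma_pos by (simp add: S_def)
  have Zeq2: "Z k = proj_psd (Z k) - proj_psd (- Z k)" for k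
    using moreau[OF symZ[of k]] by simp
  have Zeq: "Z k = X k - \<sigma> *\<^sub>R S k" for k
    using Zeq2[of k] W[of k] X_def by simp
  have symX: "symmetric_mat (X k)" for k using psd_sym[OF proj_psd_psd] X_def by simp
  have symS: "symmetric_mat (S k)" for k unfolding S_def by (intro sym_scale psd_sym[OF proj_psd_psd])
  have psdXs: "psd Xs" and psdSs: "psd Ss" and AXs: "Aop Ai Xs = b"
    and dual: "Astar Ai ys + Ss = C" and XS0: "Xs \<bullet> Ss = 0"
    using KKTstar by (auto simp: KKT_def)
  have SsXs: "Ss ** Xs = 0" using psd_inner_zero_mult[OF psdXs psdSs XS0] .
  have XsSs: "Xs ** Ss = 0" using psd_inner_zero_mult[OF psdSs psdXs] XS0 by (simp add: inner_commute)
  define R1 where "R1 = closest_point (T_S Xs)"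
  define R2 where "R2 = closest_point (T_X Ss)"
  have linR1: "linear R1" unfolding R1_def by (rule proj_sub_linear[OF subspace_T_S])
  have linR2: "linear R2" unfolding R2_def T_X_eq by (rule proj_sub_linear[OF subspace_T_S])
  define f :: "(real^'n^'n) \<times> (real^'n^'n) \<Rightarrow> (real^'m) \<times> (real^'n^'n) \<times> (real^'n^'n) \<times> (real^'n^'n) \<times> (real^'n^'n) \<times> (real^'n^'n)"
    where "f = (\<lambda>p. (Aop Ai (fst p), snd p - Pm Ai (snd p), R1 (fst p), R2 (snd p),
                    fst p - transpose (fst p), snd p - transpose (snd p)))"
  have linf: "linear f"
  proof (rule linearI)
    fix p q :: "(real^'n^'n) \<times> (real^'n^'n)"
    show "f (p + q) = f p + f q"
      by (simp add: f_def real_vector.linear_add[OF linear_Aop] Pm_add real_vector.linear_add[OF linR1]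
          real_vector.linear_add[OF linR2] transpose_add)
  next
    fix r and p :: "(real^'n^'n) \<times> (real^'n^'n)"
    show "f (r *\<^sub>R p) = r *\<^sub>R f p"
      by (simp add: f_def real_vector.linear_scale[OF linear_Aop] Pm_scale real_vector.linear_scale[OF linR1]
          real_vector.linear_scale[OF linR2] transpose_scalar scaleR_diff_right)
  qed
  define c0 where "c0 = (b, C - Pm Ai C, 0::real^'n^'n, 0::real^'n^'n, 0::real^'n^'n, 0::real^'n^'n)"
  have R1Xs: "R1 Xs = 0" unfolding R1_def
    by (rule proj_sub_char[OF subspace_T_S]) (auto simp: subspace_0[OF subspace_T_S] psd_perp_T[OF psdXs])
  have R2Ss: "R2 Ss = 0" unfolding R2_def T_X_eq
    by (rule proj_sub_char[OF subspace_T_S]) (auto simp: subspace_0[OF subspace_T_S] psd_perp_T[OF psdSs])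
  have QSs: "Ss - Pm Ai Ss = C - Pm Ai C"
  proof -
    have "Ss = C - Astar Ai ys" using dual by (simp add: algebra_simps)
    then show ?thesis by (simp add: Pm_diff Pm_Astar[OF surjA])
  qed
  have fstar: "f (Xs, Ss) = c0"
    using AXs QSs R1Xs R2Ss psd_sym[OF psdXs] psd_sym[OF psdSs]
    by (simp add: f_def c0_def symmetric_mat_def)
  obtain \<kappa> where kpos: "\<kappa> > 0" and hf: "\<And>p. \<exists>p'. f p' = c0 \<and> norm (p - p') \<le> \<kappa> * norm (f p - c0)"
    using hoffman[OF linf fstar] by blast
  obtain c1 where c1: "c1 > 0" "\<And>X'. symmetric_mat X' \<Longrightarrow> (\<forall>M\<in>T_S Xs. (X' - Xs) \<bullet> M = 0) \<Longrightarrow> norm (X' - Xs) \<le> c1 \<Longrightarrow> psd X'"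
    using local_psd[OF psdXs] by blast
  obtain c2 where c2: "c2 > 0" "\<And>X'. symmetric_mat X' \<Longrightarrow> (\<forall>M\<in>T_S Ss. (X' - Ss) \<bullet> M = 0) \<Longrightarrow> norm (X' - Ss) \<le> c2 \<Longrightarrow> psd X'"
    using local_psd[OF psdSs] by blast
  obtain BA where BA: "BA > 0" "\<And>x. norm (Aop Ai x) \<le> BA * norm x"
    using linear_bounded_pos[OF linear_Aop] by blast
  have bl: "bounded_linear f" using linf by (simp add: linear_conv_bounded_linear)
  have convP: "(\<lambda>k. (X k, S k)) \<longlonglongrightarrow> (Xs, Ss)"
    using tendsto_Pair[OF convX convS] X_def S_def by simp
  have convf: "(\<lambda>k. f (X k, S k)) \<longlonglongrightarrow> c0"
    using bounded_linear.tendsto[OF bl convP] fstar by simp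
  define \<delta> where "\<delta> = min c1 c2 / 2"
  have dpos: "\<delta> > 0" using c1 c2 \<delta>_def by simp
  have ev: "eventually (\<lambda>k. dist (f (X k, S k)) c0 < \<delta> / \<kappa> \<and> dist (X k) Xs < \<delta> \<and> dist (S k) Ss < \<delta>) sequentially"
    using tendstoD[OF convf, of "\<delta> / \<kappa>"] tendstoD[OF convX, of \<delta>] tendstoD[OF convS, of \<delta>]
      dpos kpos X_def S_def by (auto intro: eventually_conj)
  then obtain kbar where kbar: "\<And>k. k \<ge> kbar \<Longrightarrow> dist (f (X k, S k)) c0 < \<delta> / \<kappa> \<and> dist (X k) Xs < \<delta> \<and> dist (S k) Ss < \<delta>"
    unfolding eventually_sequentially by blast
  define \<alpha> where "\<alpha> = (1 + \<sigma>) * \<kappa> * (BA + 2 / \<sigma> + 1)"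
  have apos: "\<alpha> > 0" using sigma_pos kpos BA unfolding \<alpha>_def by (simp add: add_pos_pos)
  show ?thesis
  proof (intro exI[of _ kbar] exI[of _ \<alpha>] conjI allI impI apos)
    fix k assume "k \<ge> kbar"
    note kb = kbar[OF this]
    obtain p' where fp': "f p' = c0" and np': "norm ((X k, S k) - p') \<le> \<kappa> * norm (f (X k, S k) - c0)"
      using hf by blast
    define X' where "X' = fst p'"
    define S' where "S' = snd p'"
    have p'eq: "p' = (X', S')" by (simp add: X'_def S'_def)
    have AX': "Aop Ai X' = b" and QS': "S' - Pm Ai S' = C - Pm Ai C" and R1X': "R1 X' = 0"
      and R2S': "R2 S' = 0" and symX': "symmetric_mat X'" and symS': "symmetric_mat S'"
      using fp' unfolding p'eq f_def c0_def by (auto simp: symmetric_mat_def)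
    have nfc: "norm (f (X k, S k) - c0) < \<delta> / \<kappa>" using kb by (simp add: dist_norm)
    have npair: "norm ((X k, S k) - (X', S')) < \<delta>"
    proof -
      have "norm ((X k, S k) - (X', S')) \<le> \<kappa> * norm (f (X k, S k) - c0)" using np' p'eq by simp
      also have "\<dots> < \<kappa> * (\<delta> / \<kappa>)" using mult_strict_left_mono[OF nfc kpos] .
      also have "\<dots> = \<delta>" using kpos by simp
      finally show ?thesis .
    qed
    have nX: "norm (X k - X') < \<delta>" using npair norm_fst_pair[of "X k - X'" "S k - S'"] by simp
    have nS: "norm (S k - S') < \<delta>" using npair norm_snd_pair[of "S k - S'" "X k - X'"] by simp
    have perpX': "\<forall>M\<in>T_S Xs. (X' - Xs) \<bullet> M = 0"
    proof
      fix M assume M: "M \<in> T_S Xs"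
      have "(X' - R1 X') \<bullet> M = 0" unfolding R1_def using proj_sub_orth[OF subspace_T_S M] .
      then show "(X' - Xs) \<bullet> M = 0" using R1X' psd_perp_T[OF psdXs M] by (simp add: inner_diff_left)
    qed
    have perpS': "\<forall>M\<in>T_S Ss. (S' - Ss) \<bullet> M = 0"
    proof
      fix M assume M: "M \<in> T_S Ss"
      have "(S' - R2 S') \<bullet> M = 0" unfolding R2_def T_X_eq using proj_sub_orth[OF subspace_T_S M] .
      then show "(S' - Ss) \<bullet> M = 0" using R2S' psd_perp_T[OF psdSs M] by (simp add: inner_diff_left)
    qed
    have psdX': "psd X'"
    proof (rule c1(2)[OF symX' perpX'])
      have "norm (X' - Xs) \<le> norm (X' - X k) + norm (X k - Xs)" by (rule norm_diff_triangle_le[of X' "X k"]) simp_all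
      also have "\<dots> < \<delta> + \<delta>" using nX kb by (simp add: dist_norm norm_minus_commute add_strict_mono)
      finally show "norm (X' - Xs) \<le> c1" using \<delta>_def by simp
    qed
    have psdS': "psd S'"
    proof (rule c2(2)[OF symS' perpS'])
      have "norm (S' - Ss) \<le> norm (S' - S k) + norm (S k - Ss)" by (rule norm_diff_triangle_le[of S' "S k"]) simp_all
      also have "\<dots> < \<delta> + \<delta>" using nS kb by (simp add: dist_norm norm_minus_commute add_strict_mono)
      finally show "norm (S' - Ss) \<le> c2" using \<delta>_def by simp
    qed
    have XS': "X' \<bullet> S' = 0"
    proof -
      have e: "S' - Pm Ai S' = Ss - Pm Ai Ss" using QS' QSs by simp
      have "S' - Ss = (S' - Pm Ai S') - (Ss - Pm Ai Ss) + (Pm Ai S' - Pm Ai Ss)" by (simp add: algebra_simps)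
      then have d: "S' - Ss = Pm Ai S' - Pm Ai Ss" using e by simp
      have "S' - Ss = Pm Ai (S' - Ss)" unfolding Pm_diff using d .
      then have "(X' - Xs) \<bullet> (S' - Ss) = Aop Ai (X' - Xs) \<bullet> AAinv Ai (Aop Ai (S' - Ss))"
        by (metis Pm_def adjoint_A inner_commute)
      then have t1: "(X' - Xs) \<bullet> (S' - Ss) = 0" using AX' AXs by (simp add: Aop_diff)
      have XsT: "Xs \<in> T_S Ss" using psd_sym[OF psdXs] SsXs by (simp add: T_S_def)
      have SsT: "Ss \<in> T_S Xs" using psd_sym[OF psdSs] XsSs by (simp add: T_S_def matrix_mul_assoc)
      have t2: "S' \<bullet> Xs = 0" using perpS' XsT psd_perp_T[OF psdSs XsT] by (simp add: inner_diff_left)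
      have t3: "X' \<bullet> Ss = 0" using perpX' SsT psd_perp_T[OF psdXs SsT] by (simp add: inner_diff_left)
      have "X' \<bullet> S' = (X' - Xs) \<bullet> (S' - Ss) + S' \<bullet> Xs + X' \<bullet> Ss - Xs \<bullet> Ss"
        by (simp add: inner_diff_left inner_diff_right inner_commute)
      then show ?thesis using t1 t2 t3 XS0 by simp
    qed
    have fix': "X' - \<sigma> *\<^sub>R S' \<in> admm_fixed Ai b C \<sigma>"
      using fixed_point[OF surjA sigma_pos psdX' psdS' XS' AX' QS'] .
    have id1: "infdist (Z k) (admm_fixed Ai b C \<sigma>) \<le> norm ((X k - X') - \<sigma> *\<^sub>R (S k - S'))"
    proof -
      have "dist (Z k) (X' - \<sigma> *\<^sub>R S') = norm ((X k - X') - \<sigma> *\<^sub>R (S k - S'))"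
        unfolding dist_norm Zeq[of k] by (simp add: algebra_simps)
      then show ?thesis using infdist_le[OF fix', of "Z k"] by simp
    qed
    define res where "res = Z (Suc k) - Z k"
    define a where "a = Astar Ai (AAinv Ai b) - Pm Ai (X k)"
    define r where "r = (proj_psd (- Z k) - Pm Ai (proj_psd (- Z k))) - \<sigma> *\<^sub>R (C - Pm Ai C)"
    have resar: "res = a + r"
      using admm_res[OF surjA Zeq2[of k], of b C \<sigma>] iter[of k] unfolding res_def a_def r_def X_def by simp
    have orth: "a \<bullet> r = 0" unfolding a_def r_def by (rule res_orth[OF surjA])
    have nres2: "(norm res)^2 = (norm a)^2 + (norm r)^2"
      unfolding resar by (rule norm_add_Pythagorean) (simp add: orthogonal_def orth)
    have "(norm a)^2 \<le> (norm res)^2" using nres2 zero_le_power2[of "norm r"] by linarith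
    then have na: "norm a \<le> norm res" by (rule power2_le_imp_le) simp
    have "(norm r)^2 \<le> (norm res)^2" using nres2 zero_le_power2[of "norm a"] by linarith
    then have nr: "norm r \<le> norm res" by (rule power2_le_imp_le) simp
    have r_eq: "r = \<sigma> *\<^sub>R ((S k - Pm Ai (S k)) - (C - Pm Ai C))"
      unfolding r_def W by (simp add: Pm_scale scaleR_diff_right)
    have nQ: "norm ((S k - Pm Ai (S k)) - (C - Pm Ai C)) \<le> norm res / \<sigma>"
    proof -
      have "norm r = \<sigma> * norm ((S k - Pm Ai (S k)) - (C - Pm Ai C))"
        unfolding r_eq norm_scaleR using sigma_pos by simp
      then show ?thesis using nr sigma_pos by (simp add: field_simps)
    qed
    have Aa: "Aop Ai a = b - Aop Ai (X k)"
      unfolding a_def using AAinv_props(2)[OF surjA] Aop_Pm[OF surjA] by (simp add: Aop_diff)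
    have nA: "norm (Aop Ai (X k) - b) \<le> BA * norm res"
    proof -
      have "norm (Aop Ai (X k) - b) = norm (Aop Ai a)" using Aa by (simp add: norm_minus_commute)
      also have "\<dots> \<le> BA * norm a" by (rule BA(2))
      also have "\<dots> \<le> BA * norm res" using na BA(1) by simp
      finally show ?thesis .
    qed
    have fdiff: "f (X k, S k) - c0 = (Aop Ai (X k) - b, (S k - Pm Ai (S k)) - (C - Pm Ai C), R1 (X k), R2 (S k),
        0::real^'n^'n, 0::real^'n^'n)"
      using symX[of k] symS[of k] by (simp add: f_def c0_def symmetric_mat_def zero_prod_def)
    have nf: "norm (f (X k, S k) - c0) \<le> BA * norm res + norm res / \<sigma> + norm (R1 (X k)) + norm (R2 (S k))"
      unfolding fdiff using norm_tuple_le[of "Aop Ai (X k) - b" "(S k - Pm Ai (S k)) - (C - Pm Ai C)"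
          "R1 (X k)" "R2 (S k)" "0::real^'n^'n" "0::real^'n^'n"] nA nQ by simp
    have npair': "norm ((X k, S k) - (X', S')) \<le> \<kappa> * norm (f (X k, S k) - c0)" using np' p'eq by simp
    have nX': "norm (X k - X') \<le> norm ((X k, S k) - (X', S'))" using norm_fst_pair[of "X k - X'" "S k - S'"] by simp
    have nS': "norm (S k - S') \<le> norm ((X k, S k) - (X', S'))" using norm_snd_pair[of "S k - S'" "X k - X'"] by simp
    have nz: "norm ((X k - X') - \<sigma> *\<^sub>R (S k - S')) \<le> (1 + \<sigma>) * norm ((X k, S k) - (X', S'))"
    proof -
      have "norm ((X k - X') - \<sigma> *\<^sub>R (S k - S')) \<le> norm (X k - X') + norm (\<sigma> *\<^sub>R (S k - S'))"
        by (rule norm_triangle_ineq4)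
      also have "\<dots> = norm (X k - X') + \<sigma> * norm (S k - S')" using sigma_pos by simp
      also have "\<dots> \<le> norm ((X k, S k) - (X', S')) + \<sigma> * norm ((X k, S k) - (X', S'))"
        using nX' nS' sigma_pos by (intro add_mono mult_left_mono) simp_all
      finally show ?thesis by (simp add: algebra_simps)
    qed
    define t where "t = norm res"
    define r1 where "r1 = norm (R1 (X k))"
    define r2 where "r2 = norm (R2 (S k))"
    define L where "L = BA + 2 / \<sigma> + 1"
    have t0: "t \<ge> 0" and r10: "r1 \<ge> 0" and r20: "r2 \<ge> 0" by (simp_all add: t_def r1_def r2_def)
    have i1: "BA * t + t / \<sigma> \<le> L * t"
    proof -
      have "BA * t + t / \<sigma> = (BA + 1 / \<sigma>) * t" by (simp add: algebra_simps)
      also have "\<dots> \<le> L * t"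
      proof (rule mult_right_mono[OF _ t0])
        have "0 < 1 / \<sigma>" using sigma_pos by simp
        moreover have "2 / \<sigma> = 1 / \<sigma> + 1 / \<sigma>" by simp
        ultimately show "BA + 1 / \<sigma> \<le> L" unfolding L_def by linarith
      qed
      finally show ?thesis .
    qed
    have i2: "r1 \<le> L * r1"
    proof -
      have "1 \<le> L" unfolding L_def using BA(1) sigma_pos by simp
      then show ?thesis using mult_right_mono[of 1 L r1] r10 by simp
    qed
    have i3: "r2 \<le> L * (\<sigma> * r2)"
    proof -
      have "L * \<sigma> = BA * \<sigma> + 2 + \<sigma>" unfolding L_def using sigma_pos by (simp add: field_simps)
      then have "1 \<le> L * \<sigma>" using BA(1) sigma_pos by (simp add: add_nonneg_nonneg)
      then have "r2 \<le> (L * \<sigma>) * r2" using mult_right_mono[of 1 "L * \<sigma>" r2] r20 by simp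
      then show ?thesis by (simp add: mult_ac)
    qed
    have sum_le: "BA * t + t / \<sigma> + r1 + r2 \<le> L * (t + r1 + \<sigma> * r2)"
      using i1 i2 i3 by (simp add: algebra_simps)
    have K0: "0 \<le> (1 + \<sigma>) * \<kappa>" using sigma_pos kpos by simp
    have "infdist (Z k) (admm_fixed Ai b C \<sigma>) \<le> (1 + \<sigma>) * norm ((X k, S k) - (X', S'))"
      using id1 nz by linarith
    also have "\<dots> \<le> (1 + \<sigma>) * (\<kappa> * norm (f (X k, S k) - c0))"
      using npair' sigma_pos by (intro mult_left_mono) simp_all
    also have "\<dots> = ((1 + \<sigma>) * \<kappa>) * norm (f (X k, S k) - c0)" by simp
    also have "\<dots> \<le> ((1 + \<sigma>) * \<kappa>) * (BA * t + t / \<sigma> + r1 + r2)"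
      using nf K0 unfolding t_def r1_def r2_def by (intro mult_left_mono) simp_all
    also have "\<dots> \<le> ((1 + \<sigma>) * \<kappa>) * (L * (t + r1 + \<sigma> * r2))"
      using sum_le K0 by (intro mult_left_mono) simp_all
    also have "\<dots> = \<alpha> * (t + r1 + \<sigma> * r2)" unfolding \<alpha>_def L_def by simp
    finally show "infdist (Z k) (admm_fixed Ai b C \<sigma>)
             \<le> \<alpha> * (norm (Z (Suc k) - Z k)
                     + norm (closest_point (T_S Xs) (proj_psd (Z k)))
                     + \<sigma> * norm (closest_point (T_X Ss) ((1 / \<sigma>) *\<^sub>R proj_psd (- Z k))))"
      unfolding t_def r1_def r2_def res_def R1_def R2_def X_def S_def .
  qed
qed


end
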